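(* Let $\Sigma$ be an infinite alphabet and let $\mathcal{F}$ be a finite automaton over $\Sigma$ (finitely many states and finitely many transitions, each labelled by a letter of $\Sigma$). Then there exists a GVA $\mathcal{A}$ over $\Sigma$ such that $L(\mathcal{A})=\Sigma^{\star}\setminus L(\mathcal{F})$. That is, the complement of a regular language over $\Sigma$ is GVA-recognizable.
   Context: Fix an infinite alphabet $\Sigma$. A guard over a set of variables $\mathcal{X}$ (disjoint from $\Sigma$) is built by the grammar $g ::= \mathit{true} \mid \alpha=\beta \mid \alpha\neq\beta \mid g\wedge g$ with $\alpha,\beta\in\Sigma\cup\mathcal{X}$. A GVA is a tuple $\mathcal{A}=\langle\Sigma,\mathcal{X},Q,Q_0,\delta,F,\kappa\rangle$ where $\mathcal{X}$ is a finite set of variables, $Q$ a finite set of states, $Q_0\subseteq Q$ the initial states, $F\subseteq Q$ the accepting states, $\delta$ a finite set of transitions $q\xrightarrow{\alpha,g}q'$ with $q,q'\in Q$, $\alpha\in\Sigma\cup\mathcal{X}\cup\{\varepsilon\}$ and $g$ a guard, and $\kappa:\mathcal{X}\to 2^{Q}$ the refreshing function ($\kappa(x)$ is the set of states in which $x$ is freed). A configuration is a pair $(\sigma,q)$ with $q\in Q$ and $\sigma$ a partial map $\mathcal{X}\to\Sigma$. There is a step $(\sigma,q)\xrightarrow{a}(\sigma',q')$, $a\in\Sigma\cup\{\varepsilon\}$, if there is a transition $q\xrightarrow{\alpha,g}q'$ and a map $\gamma$ from the variables occurring in $\alpha$ or $g$ that are not in $\mathrm{dom}(\sigma)$ to $\Sigma$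 such that, with $\rho=\sigma\uplus\gamma$ (extended to be the identity on letters), $\rho$ satisfies $g$, $a=\rho(\alpha)$ if $\alpha\neq\varepsilon$ and $a=\varepsilon$ if $\alpha=\varepsilon$, and $\sigma'$ is the restriction of $\rho$ to $\{x\in\mathrm{dom}(\rho) : q'\notin\kappa(x)\}$. A word $w\in\Sigma^{\star}$ is accepted if there is a sequence of steps from $(\emptyset,q_0)$ with $q_0\in Q_0$ to some $(\sigma,q_f)$ with $q_f\in F$ whose labels concatenate to $w$; $L(\mathcal{A})$ is the set of accepted words. *)

theory Defs
  imports Main
begin

text \<open>Letters and variables: the alphabet is a type 's, variables a type 'x;
  the datatype below keeps them disjoint (Sigma union X).\<close>
datatype ('s,'x) sym = Let 's | Var 'x

datatype ('s,'x) guard =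
    GTrue
  | GEq "('s,'x) sym" "('s,'x) sym"
  | GNeq "('s,'x) sym" "('s,'x) sym"
  | GAnd "('s,'x) guard" "('s,'x) guard"

fun sym_vars :: "('s,'x) sym \<Rightarrow> 'x set" where
  "sym_vars (Let a) = {}"
| "sym_vars (Var x) = {x}"

fun guard_vars :: "('s,'x) guard \<Rightarrow> 'x set" where
  "guard_vars GTrue = {}"
| "guard_vars (GEq a b) = sym_vars a \<union> sym_vars b"
| "guard_vars (GNeq a b) = sym_vars a \<union> sym_vars b"
| "guard_vars (GAnd g h) = guard_vars g \<union> guard_vars h"

text \<open>Transition label: None = epsilon.\<close>
definition lbl_vars :: "('s,'x) sym option \<Rightarrow> 'x set" where
  "lbl_vars al = (case al of None \<Rightarrow> {} | Some a \<Rightarrow> sym_vars a)"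

fun sym_eval :: "('x \<Rightarrow> 's) \<Rightarrow> ('s,'x) sym \<Rightarrow> 's" where
  "sym_eval v (Let a) = a"
| "sym_eval v (Var x) = v x"

fun guard_sat :: "('x \<Rightarrow> 's) \<Rightarrow> ('s,'x) guard \<Rightarrow> bool" where
  "guard_sat v GTrue = True"
| "guard_sat v (GEq a b) = (sym_eval v a = sym_eval v b)"
| "guard_sat v (GNeq a b) = (sym_eval v a \<noteq> sym_eval v b)"
| "guard_sat v (GAnd g h) = (guard_sat v g \<and> guard_sat v h)"

record ('s,'x,'q) gva =
  gX     :: "'x set"
  gQ     :: "'q set"
  gQ0    :: "'q set"
  gDelta :: "('q \<times> ('s,'x) sym option \<times> ('s,'x) guard \<times> 'q) set"
  gF     :: "'q set"
  gKappa :: "'x \<Rightarrow> 'q set"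

definition is_gva :: "('s,'x,'q) gva \<Rightarrow> bool" where
  "is_gva A \<longleftrightarrow> finite (gX A) \<and> finite (gQ A) \<and> gQ0 A \<subseteq> gQ A \<and> gF A \<subseteq> gQ A
     \<and> finite (gDelta A)
     \<and> (\<forall>(q,al,g,q') \<in> gDelta A. q \<in> gQ A \<and> q' \<in> gQ A
            \<and> lbl_vars al \<subseteq> gX A \<and> guard_vars g \<subseteq> gX A)
     \<and> (\<forall>x \<in> gX A. gKappa A x \<subseteq> gQ A)"

text \<open>One step (sigma,q) --a--> (sigma',q'), a = None meaning epsilon.
  gamma is a map on exactly the variables of alpha and g outside dom sigma;
  rho = sigma ++ gamma (total version obtained by applying `the`, only used on dom rho).\<close>
definition gva_step :: "('s,'x,'q) gva \<Rightarrow> ('x \<rightharpoonup> 's) \<times> 'q \<Rightarrow> 's option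
      \<Rightarrow> ('x \<rightharpoonup> 's) \<times> 'q \<Rightarrow> bool" where
  "gva_step A c a c' \<longleftrightarrow> (case c of (\<sigma>, q) \<Rightarrow> case c' of (\<sigma>', q') \<Rightarrow>
     (\<exists>al g \<gamma>. (q, al, g, q') \<in> gDelta A
        \<and> dom \<gamma> = (lbl_vars al \<union> guard_vars g) - dom \<sigma>
        \<and> (let \<rho> = \<sigma> ++ \<gamma>; v = (\<lambda>x. the (\<rho> x)) in
             guard_sat v g
           \<and> a = map_option (sym_eval v) al
           \<and> \<sigma>' = \<rho> |` {x \<in> dom \<rho>. q' \<notin> gKappa A x})))"

inductive gva_run :: "('s,'x,'q) gva \<Rightarrow> ('x \<rightharpoonup> 's) \<times> 'q \<Rightarrow> 's list
      \<Rightarrow> ('x \<rightharpoonup> 's) \<times> 'q \<Rightarrow> bool" for A where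
  run_refl: "gva_run A c [] c"
| run_step: "gva_step A c a c' \<Longrightarrow> gva_run A c' w c''
     \<Longrightarrow> gva_run A c ((case a of None \<Rightarrow> [] | Some b \<Rightarrow> [b]) @ w) c''"

definition gva_lang :: "('s,'x,'q) gva \<Rightarrow> 's list set" where
  "gva_lang A = {w. \<exists>q0 \<in> gQ0 A. \<exists>\<sigma> qf. qf \<in> gF A
                   \<and> gva_run A (Map.empty, q0) w (\<sigma>, qf)}"

record ('s,'q) fa =
  fQ     :: "'q set"
  fQ0    :: "'q set"
  fDelta :: "('q \<times> 's \<times> 'q) set"
  fF     :: "'q set"

definition is_fa :: "('s,'q) fa \<Rightarrow> bool" where
  "is_fa M \<longleftrightarrow> finite (fQ M) \<and> finite (fDelta M) \<and> fQ0 M \<subseteq> fQ M \<and> fF M \<subseteq> fQ M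
     \<and> (\<forall>(q,a,q') \<in> fDelta M. q \<in> fQ M \<and> q' \<in> fQ M)"

inductive fa_run :: "('s,'q) fa \<Rightarrow> 'q \<Rightarrow> 's list \<Rightarrow> 'q \<Rightarrow> bool" for M where
  fa_refl: "fa_run M q [] q"
| fa_step: "(q, a, q') \<in> fDelta M \<Longrightarrow> fa_run M q' w q'' \<Longrightarrow> fa_run M q (a # w) q''"

definition fa_lang :: "('s,'q) fa \<Rightarrow> 's list set" where
  "fa_lang M = {w. \<exists>q0 \<in> fQ0 M. \<exists>qf \<in> fF M. fa_run M q0 w qf}"

end

theory Submission
  imports Defs
begin

definition stepS :: "('s,'q) fa \<Rightarrow> 'q set \<Rightarrow> 's \<Rightarrow> 'q set" where
  "stepS M S c = {q'. \<exists>q\<in>S. (q,c,q') \<in> fDelta M}"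

fun stepsS :: "('s,'q) fa \<Rightarrow> 'q set \<Rightarrow> 's list \<Rightarrow> 'q set" where
  "stepsS M S [] = S"
| "stepsS M S (c#w) = stepsS M (stepS M S c) w"

definition ngu :: "'s list \<Rightarrow> ('s,nat) guard" where
  "ngu ls = foldr (\<lambda>b g. GAnd (GNeq (Var 0) (Let b)) g) ls GTrue"

definition cA :: "('s,'q) fa \<Rightarrow> ('q set \<Rightarrow> nat) \<Rightarrow> 's list \<Rightarrow> ('s,nat,nat) gva" where
  "cA M enc ls = \<lparr> gX = {0}, gQ = enc ` Pow (fQ M), gQ0 = {enc (fQ0 M)},
     gDelta = (\<lambda>(S,a). (enc S, Some (Let a), GTrue, enc (stepS M S a))) ` (Pow (fQ M) \<times> set ls)
        \<union> (\<lambda>S. (enc S, Some (Var 0), ngu ls, enc {})) ` Pow (fQ M),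
     gF = enc ` {S. S \<subseteq> fQ M \<and> S \<inter> fF M = {}},
     gKappa = \<lambda>_. enc ` Pow (fQ M) \<rparr>"

lemma ngu_sat: "guard_sat v (ngu ls) \<longleftrightarrow> (\<forall>b\<in>set ls. v 0 \<noteq> b)"
  by (induction ls) (auto simp: ngu_def)

lemma ngu_vars: "guard_vars (ngu ls) \<subseteq> {0}"
  by (induction ls) (auto simp: ngu_def)

lemma stepS_sub: "is_fa M \<Longrightarrow> stepS M S c \<subseteq> fQ M"
  unfolding is_fa_def stepS_def by fastforce

lemma stepsS_sub: "is_fa M \<Longrightarrow> S \<subseteq> fQ M \<Longrightarrow> stepsS M S w \<subseteq> fQ M"
  by (induction w arbitrary: S) (auto simp: stepS_sub)

lemma stepS_empty: "set ls = {c. \<exists>q q'. (q,c,q') \<in> fDelta M} \<Longrightarrow> c \<notin> set ls \<Longrightarrow> stepS M S c = {}"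
  unfolding stepS_def by auto

lemma step_char:
  fixes ls :: "'s list" and M :: "('s,'q) fa"
  assumes inj: "inj_on enc (Pow (fQ M))" and ls: "set ls = {c. \<exists>q q'. (q,c,q') \<in> fDelta M}"
    and fa: "is_fa M" and S: "S \<subseteq> fQ M"
  shows "gva_step (cA M enc ls) (Map.empty, enc S) a (\<sigma>', q')
     \<longleftrightarrow> (\<exists>c. a = Some c \<and> q' = enc (stepS M S c) \<and> \<sigma>' = Map.empty)"
proof
  assume "gva_step (cA M enc ls) (Map.empty, enc S) a (\<sigma>', q')"
  then obtain al g \<gamma> where tr: "(enc S, al, g, q') \<in> gDelta (cA M enc ls)"
    and dg: "dom \<gamma> = (lbl_vars al \<union> guard_vars g)"
    and gs: "guard_sat (\<lambda>x. the (\<gamma> x)) g"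
    and a: "a = map_option (sym_eval (\<lambda>x. the (\<gamma> x))) al"
    and s': "\<sigma>' = \<gamma> |` {x \<in> dom \<gamma>. q' \<notin> gKappa (cA M enc ls) x}"
    unfolding gva_step_def by (auto simp: Let_def)
  have qin: "q' \<in> enc ` Pow (fQ M)"
    using tr stepS_sub[OF fa] by (auto simp: cA_def)
  hence "\<sigma>' = Map.empty" using s' by (auto simp: cA_def)
  moreover have "\<exists>c. a = Some c \<and> q' = enc (stepS M S c)"
  proof -
    from tr consider (l) S' b where "S' \<subseteq> fQ M" "b \<in> set ls" "enc S = enc S'"
        "al = Some (Let b)" "q' = enc (stepS M S' b)"
      | (v) S' where "S' \<subseteq> fQ M" "enc S = enc S'" "al = Some (Var 0)" "g = ngu ls" "q' = enc {}"
      by (auto simp: cA_def)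
    then show ?thesis
    proof cases
      case l
      hence "S = S'" using inj S by (auto dest: inj_onD)
      thus ?thesis using l a by auto
    next
      case v
      hence "the (\<gamma> 0) \<notin> set ls" using gs ngu_sat by metis
      hence "stepS M S (the (\<gamma> 0)) = {}" using stepS_empty[OF ls] by blast
      thus ?thesis using v a by auto
    qed
  qed
  ultimately show "\<exists>c. a = Some c \<and> q' = enc (stepS M S c) \<and> \<sigma>' = Map.empty" by blast
next
  assume "\<exists>c. a = Some c \<and> q' = enc (stepS M S c) \<and> \<sigma>' = Map.empty"
  then obtain c where c: "a = Some c" "q' = enc (stepS M S c)" "\<sigma>' = Map.empty" by blast
  have qin: "q' \<in> enc ` Pow (fQ M)" using c stepS_sub[OF fa] by auto
  show "gva_step (cA M enc ls) (Map.empty, enc S) a (\<sigma>', q')"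
  proof (cases "c \<in> set ls")
    case True
    have "(enc S, Some (Let c), GTrue, q') \<in> gDelta (cA M enc ls)"
      using True S c by (auto simp: cA_def)
    then show ?thesis unfolding gva_step_def using c
      by (auto simp: Let_def lbl_vars_def intro!: exI[of _ "Some (Let c)"] exI[of _ GTrue] exI[of _ Map.empty])
  next
    case False
    have e: "stepS M S c = {}" using stepS_empty[OF ls False] .
    have tr: "(enc S, Some (Var 0), ngu ls, q') \<in> gDelta (cA M enc ls)"
      using S c e by (auto simp: cA_def)
    have dv: "lbl_vars (Some (Var 0 :: ('s,nat) sym)) \<union> guard_vars (ngu ls) = {0::nat}"
      using ngu_vars[of ls] by (auto simp: lbl_vars_def)
    have gs: "guard_sat (\<lambda>x. the ([0 \<mapsto> c] x)) (ngu ls)" using False by (auto simp: ngu_sat)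
    have "q' \<in> gKappa (cA M enc ls) 0" using qin by (simp add: cA_def)
    hence rs: "\<sigma>' = [0 \<mapsto> c] |` {x \<in> dom [0 \<mapsto> c]. q' \<notin> gKappa (cA M enc ls) x}"
      using c qin by (auto simp: restrict_map_def fun_eq_iff cA_def)
    show ?thesis unfolding gva_step_def
      apply (simp only: prod.case)
      apply (rule exI[of _ "Some (Var 0)"], rule exI[of _ "ngu ls"], rule exI[of _ "[0 \<mapsto> c]"])
      apply (simp only: Let_def)
      apply (intro conjI)
      apply (rule tr)
      using dv apply simp
      using gs apply simp
      using c apply simp
      using rs apply simp
      done
  qed
qed

lemma run_det:
  assumes inj: "inj_on enc (Pow (fQ M))" and ls: "set ls = {c. \<exists>q q'. (q,c,q') \<in> fDelta M}"
    and fa: "is_fa M"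
  shows "gva_run (cA M enc ls) c w c' \<Longrightarrow> fst c = Map.empty \<Longrightarrow> snd c = enc S \<Longrightarrow> S \<subseteq> fQ M
     \<Longrightarrow> snd c' = enc (stepsS M S w)"
proof (induction arbitrary: S rule: gva_run.induct)
  case (run_refl c)
  then show ?case by simp
next
  case (run_step c a c' w c'')
  obtain \<sigma>' q' where c': "c' = (\<sigma>', q')" by (cases c')
  have "c = (Map.empty, enc S)" using run_step.prems by (cases c) auto
  then obtain b where b: "a = Some b" "q' = enc (stepS M S b)" "\<sigma>' = Map.empty"
    using run_step.hyps(1) step_char[OF inj ls fa run_step.prems(3)] c' by blast
  have "snd c'' = enc (stepsS M (stepS M S b) w)"
    using run_step.IH[of "stepS M S b"] c' b stepS_sub[OF fa] by auto
  then show ?case using b by simp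
qed

lemma run_ex:
  assumes inj: "inj_on enc (Pow (fQ M))" and ls: "set ls = {c. \<exists>q q'. (q,c,q') \<in> fDelta M}"
    and fa: "is_fa M"
  shows "S \<subseteq> fQ M \<Longrightarrow> \<exists>\<sigma>. gva_run (cA M enc ls) (Map.empty, enc S) w (\<sigma>, enc (stepsS M S w))"
proof (induction w arbitrary: S)
  case Nil
  then show ?case using run_refl by fastforce
next
  case (Cons c w)
  have st: "gva_step (cA M enc ls) (Map.empty, enc S) (Some c) (Map.empty, enc (stepS M S c))"
    using step_char[OF inj ls fa Cons.prems] by blast
  obtain \<sigma> where r: "gva_run (cA M enc ls) (Map.empty, enc (stepS M S c)) w (\<sigma>, enc (stepsS M (stepS M S c) w))"
    using Cons.IH stepS_sub[OF fa] by blast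
  have "gva_run (cA M enc ls) (Map.empty, enc S) ((case Some c of None \<Rightarrow> [] | Some b \<Rightarrow> [b]) @ w) (\<sigma>, enc (stepsS M (stepS M S c) w))"
    by (rule run_step[OF st r])
  then show ?case by auto
qed

lemma fa_run_nil: "fa_run M q [] q' \<longleftrightarrow> q = q'"
  by (auto elim: fa_run.cases intro: fa_run.intros)

lemma fa_run_cons: "fa_run M q (c#w) q'' \<longleftrightarrow> (\<exists>q'. (q,c,q') \<in> fDelta M \<and> fa_run M q' w q'')"
  by (auto elim: fa_run.cases intro: fa_run.intros)

lemma stepsS_fa: "q'' \<in> stepsS M S w \<longleftrightarrow> (\<exists>q\<in>S. fa_run M q w q'')"
  by (induction w arbitrary: S) (auto simp: fa_run_nil fa_run_cons stepS_def)

theorem mainTheorem2: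
  fixes M :: "('s, 'q) fa"
  assumes "infinite (UNIV :: 's set)"
      and "is_fa M"
  shows "\<exists>A :: ('s, nat, nat) gva. is_gva A \<and> gva_lang A = UNIV - fa_lang M"
proof -
  have fa: "is_fa M" by fact
  have fQ: "finite (fQ M)" using fa by (simp add: is_fa_def)
  have fP: "finite (Pow (fQ M))" using fQ by simp
  obtain enc :: "'q set \<Rightarrow> nat" where inj: "inj_on enc (Pow (fQ M))"
    using finite_imp_inj_to_nat_seg[OF fP] by meson
  have "finite {c. \<exists>q q'. (q,c,q') \<in> fDelta M}"
  proof -
    have "{c. \<exists>q q'. (q,c,q') \<in> fDelta M} = (\<lambda>(q,c,q'). c) ` fDelta M" by force
    thus ?thesis using fa by (simp add: is_fa_def)
  qed
  then obtain ls where ls: "set ls = {c. \<exists>q q'. (q,c,q') \<in> fDelta M}"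
    using finite_list by meson
  let ?A = "cA M enc ls"
  have "is_gva ?A"
    unfolding is_gva_def
  proof (intro conjI)
    show "finite (gX ?A)" "finite (gQ ?A)" using fQ by (auto simp: cA_def)
    show "gQ0 ?A \<subseteq> gQ ?A" "gF ?A \<subseteq> gQ ?A" "\<forall>x\<in>gX ?A. gKappa ?A x \<subseteq> gQ ?A"
      using fa by (auto simp: cA_def is_fa_def)
    show "finite (gDelta ?A)" using fQ by (simp add: cA_def)
    show "\<forall>(q, al, g, q')\<in>gDelta ?A. q \<in> gQ ?A \<and> q' \<in> gQ ?A \<and> lbl_vars al \<subseteq> gX ?A \<and> guard_vars g \<subseteq> gX ?A"
      using stepS_sub[OF fa] ngu_vars[of ls] by (auto simp: cA_def lbl_vars_def)
  qed
  moreover have "gva_lang ?A = UNIV - fa_lang M"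
  proof (intro set_eqI iffI)
    fix w assume "w \<in> gva_lang ?A"
    then obtain \<sigma> qf where qf: "qf \<in> gF ?A" and r: "gva_run ?A (Map.empty, enc (fQ0 M)) w (\<sigma>, qf)"
      by (auto simp: gva_lang_def cA_def)
    have q0: "fQ0 M \<subseteq> fQ M" using fa by (simp add: is_fa_def)
    have "qf = enc (stepsS M (fQ0 M) w)" using run_det[OF inj ls fa r] q0 by simp
    moreover obtain S where "S \<subseteq> fQ M" "S \<inter> fF M = {}" "qf = enc S" using qf by (auto simp: cA_def)
    ultimately have dj: "stepsS M (fQ0 M) w \<inter> fF M = {}"
      using inj stepsS_sub[OF fa q0] by (metis PowI inj_onD)
    have "w \<notin> fa_lang M"
    proof
      assume "w \<in> fa_lang M"
      then obtain q0 qf where "q0 \<in> fQ0 M" "qf \<in> fF M" "fa_run M q0 w qf"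
        unfolding fa_lang_def by blast
      hence "qf \<in> stepsS M (fQ0 M) w" using stepsS_fa by metis
      thus False using dj \<open>qf \<in> fF M\<close> by blast
    qed
    thus "w \<in> UNIV - fa_lang M" by simp
  next
    fix w assume "w \<in> UNIV - fa_lang M"
    have d: "stepsS M (fQ0 M) w \<inter> fF M = {}"
    proof (rule ccontr)
      assume "stepsS M (fQ0 M) w \<inter> fF M \<noteq> {}"
      then obtain qf where "qf \<in> stepsS M (fQ0 M) w" "qf \<in> fF M" by blast
      then obtain q0 where "q0 \<in> fQ0 M" "fa_run M q0 w qf" using stepsS_fa by metis
      hence "w \<in> fa_lang M" using \<open>qf \<in> fF M\<close> unfolding fa_lang_def by blast
      thus False using \<open>w \<in> UNIV - fa_lang M\<close> by simp
    qed
    have q0: "fQ0 M \<subseteq> fQ M" using fa by (simp add: is_fa_def)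
    obtain \<sigma> where r: "gva_run ?A (Map.empty, enc (fQ0 M)) w (\<sigma>, enc (stepsS M (fQ0 M) w))"
      using run_ex[OF inj ls fa q0] by blast
    have "enc (stepsS M (fQ0 M) w) \<in> gF ?A" using d stepsS_sub[OF fa q0] by (auto simp: cA_def)
    moreover have "enc (fQ0 M) \<in> gQ0 ?A" by (simp add: cA_def)
    ultimately show "w \<in> gva_lang ?A" using r unfolding gva_lang_def by blast
  qed
  ultimately show ?thesis by blast
qed

end
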